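(* Let $\mathcal K$ (UAVs) and $\mathcal I$ (subscribers) be finite sets. Fix $\sigma^2>0$, channel gains $h_{ij}>0$ ($i\in\mathcal I$, $j\in\mathcal K$), association indicators $c_{ik}\in\{0,1\}$ with $\sum_{k}c_{ik}\le1$ for all $i$ and $\sum_i c_{ik}\le 1$ for all $k$, constants $L>0$, $B>0$, $V\rho_1\ge 0$, nonnegative weights $a_i$ ($i\in\mathcal I$) and $w_k$ ($k\in\mathcal K$), and power bounds $0\le p^{\min}_k$, $p^c_k\ge 0$, $\hat p_k$. For $p=(p_k)_{k\in\mathcal K}$ let $$r_i(p)=\sum_{k\in\mathcal K}c_{ik}\log_2\Big(1+\frac{p_kh_{ik}}{\sigma^2+\sum_{j\in\mathcal K\setminus\{k\}}p_jh_{ij}}\Big),$$ and let $\mathcal F=\{p:\ p^{\min}_k\le p_k\le \hat p_k-p^c_k\ \forall k\}$. Problem (P): minimize over $p\in\mathcal F$ the function $\Phi(p)=\sum_{k}w_kp_k+V\rho_1\sum_{i}\frac{L}{B\,r_i(p)}-\sum_i a_i r_i(p)$ (with $L/(B\cdot 0)=+\infty$); let $\mathrm{OPT}_P=\inf_{p\in\mathcal F}\Phi(p)$. Fix a local point $p^{(r)}\ge 0$ and define $\hat\Lambda_i(p)=\log_2(\sigma^2+\sum_{j}p_jh_{ij})$, $F^{(r)}_{ik}=\log_2(\sigma^2+\sum_{j\ne k}p^{(r)}_jh_{ij})$, $G^{(r)}_{ikj}=h_{ij}/\big((\sigma^2+\sum_{l\ne k}p^{(r)}_lh_{il})\ln2\big)$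 for $j\ne k$. Problem (C): maximize over $(p,\xi,\eta)$, $\xi=(\xi_i)_{i\in\mathcal I}$, $\eta=(\eta_i)_{i\in\mathcal I}$, the objective $-\sum_k w_kp_k+\sum_i a_i\eta_i-V\rho_1\sum_i\xi_i$ subject to: $p\in\mathcal F$; $\xi_i\ge0,\ \eta_i\ge 0$ and $\xi_i\eta_i\ge L/B$ for all $i$; and for all $i$, $$\sum_{k}c_{ik}\big(\hat\Lambda_i(p)-F^{(r)}_{ik}\big)-\sum_k c_{ik}\sum_{j\ne k}G^{(r)}_{ikj}(p_j-p^{(r)}_j)\ge\eta_i .$$ Let $\mathrm{OPT}_C$ be the supremum of the objective of (C) over its feasible set ($-\infty$ if infeasible). Then $\mathrm{OPT}_P\le -\mathrm{OPT}_C$, i.e., the negative of the optimal value of (C) is an upper bound on the optimal value of (P).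
   Context: Problem (P) is the per-slot UAV transmit-power subproblem of a Lyapunov drift-plus-penalty scheme for multi-UAV video transmission: in the paper $w_k=V\rho_2+[Y_k(t)]^+$ and $a_i=[X_i(t)]^++[Z_i(t)]^+$ with $V,\rho_1,\rho_2\ge0$ and $[x]^+=\max\{x,0\}$, $L$ is the video data length per slot and $B$ the bandwidth; $r_i(p)$ is the achievable rate of subscriber $i$ under the fixed association $c$ and fixed UAV positions (encoded in $h_{ij}$). *)

theory Defs
  imports "HOL-Analysis.Analysis"
begin

definition rate ::
  "'k set \<Rightarrow> real \<Rightarrow> ('i \<Rightarrow> 'k \<Rightarrow> real) \<Rightarrow> ('i \<Rightarrow> 'k \<Rightarrow> real) \<Rightarrow> ('k \<Rightarrow> real) \<Rightarrow> 'i \<Rightarrow> real"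
  where "rate K sigma2 h c p i =
     (\<Sum>k\<in>K. c i k * log 2 (1 + p k * h i k / (sigma2 + (\<Sum>j\<in>K - {k}. p j * h i j))))"

definition feasP :: "'k set \<Rightarrow> ('k \<Rightarrow> real) \<Rightarrow> ('k \<Rightarrow> real) \<Rightarrow> ('k \<Rightarrow> real) \<Rightarrow> ('k \<Rightarrow> real) set"
  where "feasP K pmin phat pc = {p. \<forall>k\<in>K. pmin k \<le> p k \<and> p k \<le> phat k - pc k}"

definition delay_term :: "real \<Rightarrow> real \<Rightarrow> real \<Rightarrow> ereal"
  where "delay_term L B r = (if r = 0 then \<infinity> else ereal (L / (B * r)))"

definition PhiP ::
  "'k set \<Rightarrow> 'i set \<Rightarrow> real \<Rightarrow> ('i \<Rightarrow> 'k \<Rightarrow> real) \<Rightarrow> ('i \<Rightarrow> 'k \<Rightarrow> real) \<Rightarrow> real \<Rightarrow> real \<Rightarrow> real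
   \<Rightarrow> ('i \<Rightarrow> real) \<Rightarrow> ('k \<Rightarrow> real) \<Rightarrow> ('k \<Rightarrow> real) \<Rightarrow> ereal"
  where "PhiP K I sigma2 h c L B Vrho1 a w p =
     ereal (\<Sum>k\<in>K. w k * p k)
     + ereal Vrho1 * (\<Sum>i\<in>I. delay_term L B (rate K sigma2 h c p i))
     - ereal (\<Sum>i\<in>I. a i * rate K sigma2 h c p i)"

definition OPT_P where
  "OPT_P K I sigma2 h c L B Vrho1 a w pmin phat pc =
     (INF p\<in>feasP K pmin phat pc. PhiP K I sigma2 h c L B Vrho1 a w p)"

definition feasC ::
  "'k set \<Rightarrow> 'i set \<Rightarrow> real \<Rightarrow> ('i \<Rightarrow> 'k \<Rightarrow> real) \<Rightarrow> ('i \<Rightarrow> 'k \<Rightarrow> real) \<Rightarrow> real \<Rightarrow> real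
   \<Rightarrow> ('k \<Rightarrow> real) \<Rightarrow> ('k \<Rightarrow> real) \<Rightarrow> ('k \<Rightarrow> real) \<Rightarrow> ('k \<Rightarrow> real)
   \<Rightarrow> (('k \<Rightarrow> real) \<times> ('i \<Rightarrow> real) \<times> ('i \<Rightarrow> real)) set"
  where "feasC K I sigma2 h c L B pmin phat pc pr =
     {(p, xi, eta). p \<in> feasP K pmin phat pc \<and>
        (\<forall>i\<in>I. xi i \<ge> 0 \<and> eta i \<ge> 0 \<and> xi i * eta i \<ge> L / B) \<and>
        (\<forall>i\<in>I.
          (\<Sum>k\<in>K. c i k * (log 2 (sigma2 + (\<Sum>j\<in>K. p j * h i j))
                              - log 2 (sigma2 + (\<Sum>j\<in>K - {k}. pr j * h i j))))
          - (\<Sum>k\<in>K. c i k * (\<Sum>j\<in>K - {k}.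
                 h i j / ((sigma2 + (\<Sum>l\<in>K - {k}. pr l * h i l)) * ln 2) * (p j - pr j)))
          \<ge> eta i)}"

definition objC ::
  "'k set \<Rightarrow> 'i set \<Rightarrow> real \<Rightarrow> ('i \<Rightarrow> real) \<Rightarrow> ('k \<Rightarrow> real)
   \<Rightarrow> ('k \<Rightarrow> real) \<times> ('i \<Rightarrow> real) \<times> ('i \<Rightarrow> real) \<Rightarrow> real"
  where "objC K I Vrho1 a w x = (case x of (p, xi, eta) \<Rightarrow>
     - (\<Sum>k\<in>K. w k * p k) + (\<Sum>i\<in>I. a i * eta i) - Vrho1 * (\<Sum>i\<in>I. xi i))"

text \<open>Supremum in the extended reals; Sup {} = -infinity for an infeasible problem.\<close>
definition OPT_C where
  "OPT_C K I sigma2 h c L B Vrho1 a w pmin phat pc pr =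
     (SUP x\<in>feasC K I sigma2 h c L B pmin phat pc pr. ereal (objC K I Vrho1 a w x))"

end

theory Submission
  imports Defs
begin

lemma logineq:
  fixes A A0 :: real assumes "A > 0" "A0 > 0"
  shows "log 2 A - log 2 A0 \<le> (A - A0) / (A0 * ln 2)"
proof -
  have "ln (A/A0) \<le> A/A0 - 1" using assms by (intro ln_le_minus_one) auto
  hence h: "ln A - ln A0 \<le> (A - A0)/A0" using assms by (simp add: ln_div diff_divide_distrib)
  have "log 2 A - log 2 A0 = (ln A - ln A0) / ln 2" by (simp add: log_def diff_divide_distrib)
  also have "\<dots> \<le> ((A - A0)/A0) / ln 2" by (rule divide_right_mono[OF h]) simp
  finally show ?thesis by simp
qed

lemma perk:
  fixes K :: "'k set" and p pr hh :: "'k \<Rightarrow> real" and s :: real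
  assumes K: "finite K" "k \<in> K" and s: "s > 0"
    and hp: "\<forall>j\<in>K. hh j > 0" and pp: "\<forall>j\<in>K. p j \<ge> 0" and prp: "\<forall>j\<in>K. pr j \<ge> 0"
  shows "(log 2 (s + (\<Sum>j\<in>K. p j * hh j)) - log 2 (s + (\<Sum>j\<in>K - {k}. pr j * hh j)))
     - (\<Sum>j\<in>K - {k}. hh j / ((s + (\<Sum>l\<in>K - {k}. pr l * hh l)) * ln 2) * (p j - pr j))
     \<le> log 2 (1 + p k * hh k / (s + (\<Sum>j\<in>K - {k}. p j * hh j)))"
proof -
  define A where "A = s + (\<Sum>j\<in>K - {k}. p j * hh j)"
  define A0 where "A0 = s + (\<Sum>j\<in>K - {k}. pr j * hh j)"
  have "(\<Sum>j\<in>K - {k}. p j * hh j) \<ge> 0" using pp hp by (intro sum_nonneg) (simp add: less_imp_le)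
  hence Apos: "A > 0" using s unfolding A_def by linarith
  have "(\<Sum>j\<in>K - {k}. pr j * hh j) \<ge> 0" using prp hp by (intro sum_nonneg) (simp add: less_imp_le)
  hence A0pos: "A0 > 0" using s unfolding A0_def by linarith
  have pk: "p k * hh k \<ge> 0" using pp hp K by (simp add: less_imp_le)
  have tot: "s + (\<Sum>j\<in>K. p j * hh j) = A + p k * hh k"
    unfolding A_def using K by (simp add: sum.remove)
  have G: "(\<Sum>j\<in>K - {k}. hh j / (A0 * ln 2) * (p j - pr j)) = (A - A0) / (A0 * ln 2)"
  proof -
    have "(\<Sum>j\<in>K - {k}. hh j / (A0 * ln 2) * (p j - pr j))
        = (\<Sum>j\<in>K - {k}. p j * hh j - pr j * hh j) / (A0 * ln 2)"
      by (simp add: sum_divide_distrib algebra_simps)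
    also have "\<dots> = (A - A0) / (A0 * ln 2)" unfolding A_def A0_def by (simp add: sum_subtractf)
    finally show ?thesis .
  qed
  have R: "log 2 (1 + p k * hh k / A) = log 2 (A + p k * hh k) - log 2 A"
  proof -
    have "1 + p k * hh k / A = (A + p k * hh k) / A" using Apos by (simp add: field_simps)
    thus ?thesis using Apos pk by (simp add: log_divide)
  qed
  show ?thesis
    using logineq[OF Apos A0pos] unfolding A_def[symmetric] A0_def[symmetric] tot G R by linarith
qed

theorem lemma1:
  fixes K :: "'k set" and I :: "'i set"
    and sigma2 L B Vrho1 :: real
    and h c :: "'i \<Rightarrow> 'k \<Rightarrow> real"
    and a :: "'i \<Rightarrow> real" and w pmin pc phat pr :: "'k \<Rightarrow> real"
  assumes "finite K" and "finite I"
    and "sigma2 > 0"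
    and "\<forall>i\<in>I. \<forall>j\<in>K. h i j > 0"
    and "\<forall>i\<in>I. \<forall>k\<in>K. c i k \<in> {0, 1}"
    and "\<forall>i\<in>I. (\<Sum>k\<in>K. c i k) \<le> 1"
    and "\<forall>k\<in>K. (\<Sum>i\<in>I. c i k) \<le> 1"
    and "L > 0" and "B > 0" and "Vrho1 \<ge> 0"
    and "\<forall>i\<in>I. a i \<ge> 0" and "\<forall>k\<in>K. w k \<ge> 0"
    and "\<forall>k\<in>K. pmin k \<ge> 0" and "\<forall>k\<in>K. pc k \<ge> 0"
    and "\<forall>k\<in>K. pr k \<ge> 0"
  shows "OPT_P K I sigma2 h c L B Vrho1 a w pmin phat pc
         \<le> - OPT_C K I sigma2 h c L B Vrho1 a w pmin phat pc pr"
proof -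
  have key: "PhiP K I sigma2 h c L B Vrho1 a w p \<le> ereal (- objC K I Vrho1 a w (p, xi, eta))"
    if F: "(p, xi, eta) \<in> feasC K I sigma2 h c L B pmin phat pc pr" for p xi eta
  proof -
    have pF: "p \<in> feasP K pmin phat pc"
      and xe: "\<forall>i\<in>I. xi i \<ge> 0 \<and> eta i \<ge> 0 \<and> xi i * eta i \<ge> L / B"
      and cc: "\<forall>i\<in>I.
          (\<Sum>k\<in>K. c i k * (log 2 (sigma2 + (\<Sum>j\<in>K. p j * h i j))
                              - log 2 (sigma2 + (\<Sum>j\<in>K - {k}. pr j * h i j))))
          - (\<Sum>k\<in>K. c i k * (\<Sum>j\<in>K - {k}.
                 h i j / ((sigma2 + (\<Sum>l\<in>K - {k}. pr l * h i l)) * ln 2) * (p j - pr j)))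
          \<ge> eta i"
      using F unfolding feasC_def by auto
    have pp: "\<forall>j\<in>K. p j \<ge> 0" using pF assms(13) unfolding feasP_def by force
    have rge: "rate K sigma2 h c p i \<ge> eta i" if i: "i \<in> I" for i
    proof -
      have "eta i \<le> (\<Sum>k\<in>K. c i k * ((log 2 (sigma2 + (\<Sum>j\<in>K. p j * h i j))
                              - log 2 (sigma2 + (\<Sum>j\<in>K - {k}. pr j * h i j)))
          - (\<Sum>j\<in>K - {k}.
                 h i j / ((sigma2 + (\<Sum>l\<in>K - {k}. pr l * h i l)) * ln 2) * (p j - pr j))))"
        using cc i by (simp add: right_diff_distrib sum_subtractf)
      also have "\<dots> \<le> rate K sigma2 h c p i"
        unfolding rate_def
      proof (rule sum_mono)
        fix k assume k: "k \<in> K"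
        have c0: "c i k \<ge> 0" using assms(5) i k by force
        show "c i k * ((log 2 (sigma2 + (\<Sum>j\<in>K. p j * h i j))
                              - log 2 (sigma2 + (\<Sum>j\<in>K - {k}. pr j * h i j)))
          - (\<Sum>j\<in>K - {k}.
                 h i j / ((sigma2 + (\<Sum>l\<in>K - {k}. pr l * h i l)) * ln 2) * (p j - pr j)))
          \<le> c i k * log 2 (1 + p k * h i k / (sigma2 + (\<Sum>j\<in>K - {k}. p j * h i j)))"
          by (rule mult_left_mono[OF perk[OF assms(1) k assms(3)] c0])
             (use assms(4) i pp assms(15) in auto)
      qed
      finally show ?thesis .
    qed
    have epos: "eta i > 0" if i: "i \<in> I" for i
    proof (rule ccontr)
      assume "\<not> eta i > 0"
      hence "eta i = 0" using xe i by force
      hence "xi i * eta i = 0" by simp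
      moreover have "L / B > 0" using assms(8,9) by simp
      ultimately show False using xe i by force
    qed
    define r where "r i = rate K sigma2 h c p i" for i
    have rpos: "r i > 0" if "i \<in> I" for i using rge epos that unfolding r_def by force
    have dt: "delay_term L B (r i) = ereal (L / (B * r i))" if "i \<in> I" for i
      using rpos[OF that] unfolding delay_term_def by simp
    have dxi: "L / (B * r i) \<le> xi i" if i: "i \<in> I" for i
    proof -
      have "L / B \<le> xi i * eta i" using xe i by auto
      also have "\<dots> \<le> xi i * r i" using xe i rge[OF i] unfolding r_def by (intro mult_left_mono) auto
      finally have "L / B \<le> xi i * r i" .
      thus ?thesis using rpos[OF i] assms(9) by (simp add: field_simps)
    qed
    have ar: "a i * eta i \<le> a i * r i" if i: "i \<in> I" for i
      using assms(11) i rge[OF i] unfolding r_def by (intro mult_left_mono) auto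
    have S: "(\<Sum>i\<in>I. delay_term L B (r i)) = ereal (\<Sum>i\<in>I. L / (B * r i))"
      using sum.cong[OF refl dt, of I] by simp
    have real: "(\<Sum>k\<in>K. w k * p k) + Vrho1 * (\<Sum>i\<in>I. L / (B * r i)) - (\<Sum>i\<in>I. a i * r i)
       \<le> - objC K I Vrho1 a w (p, xi, eta)"
    proof -
      have "(\<Sum>i\<in>I. L / (B * r i)) \<le> (\<Sum>i\<in>I. xi i)" using dxi by (rule sum_mono)
      hence "Vrho1 * (\<Sum>i\<in>I. L / (B * r i)) \<le> Vrho1 * (\<Sum>i\<in>I. xi i)"
        using assms(10) by (rule mult_left_mono)
      moreover have "(\<Sum>i\<in>I. a i * eta i) \<le> (\<Sum>i\<in>I. a i * r i)" using ar by (rule sum_mono)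
      ultimately show ?thesis unfolding objC_def by simp
    qed
    have "PhiP K I sigma2 h c L B Vrho1 a w p
        = ereal ((\<Sum>k\<in>K. w k * p k) + Vrho1 * (\<Sum>i\<in>I. L / (B * r i)) - (\<Sum>i\<in>I. a i * r i))"
      unfolding PhiP_def r_def[symmetric] S by simp
    thus ?thesis using real by simp
  qed
  have "ereal (objC K I Vrho1 a w x) \<le> - OPT_P K I sigma2 h c L B Vrho1 a w pmin phat pc"
    if x: "x \<in> feasC K I sigma2 h c L B pmin phat pc pr" for x
  proof -
    obtain p xi eta where xd: "x = (p, xi, eta)" by (cases x) auto
    have pF: "p \<in> feasP K pmin phat pc" using x unfolding xd feasC_def by auto
    have "OPT_P K I sigma2 h c L B Vrho1 a w pmin phat pc \<le> PhiP K I sigma2 h c L B Vrho1 a w p"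
      unfolding OPT_P_def by (rule INF_lower[OF pF])
    also have "\<dots> \<le> ereal (- objC K I Vrho1 a w x)" using key x unfolding xd by blast
    finally have "OPT_P K I sigma2 h c L B Vrho1 a w pmin phat pc \<le> - ereal (objC K I Vrho1 a w x)" by simp
    thus ?thesis by (metis ereal_minus_le_minus ereal_uminus_uminus)
  qed
  hence "OPT_C K I sigma2 h c L B Vrho1 a w pmin phat pc pr \<le> - OPT_P K I sigma2 h c L B Vrho1 a w pmin phat pc"
    unfolding OPT_C_def by (rule SUP_least)
  thus ?thesis by (metis ereal_minus_le_minus ereal_uminus_uminus)
qed

end
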